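(* The state $h$ on $U_n^{nc}$ defined below is tracial, and $h\star_T\phi=h$ for every tracial state $\phi$ on $U_n^{nc}$. Consequently $h$ is the Haar trace on $U\langle n\rangle$ for the tensor convolution.
   Context: $U_n^{nc}$ is the universal unital $*$-algebra generated by $u_{ij}$ ($1\le i,j\le n$) with $\sum_ku_{ki}^*u_{kj}=\delta_{ij}=\sum_ku_{ik}u_{jk}^*$, with $\Delta(u_{ij})=\sum_ku_{ik}^{(1)}u_{kj}^{(2)}$ into the free product $U_n^{nc}\sqcup U_n^{nc}$, $\delta(u_{ij})=\delta_{ij}$. Tensor convolution: $\phi\star_T\psi=(\phi\otimes\psi)\circ\Delta$, where $\phi\otimes\psi$ is the unital functional on $U_n^{nc}\sqcup U_n^{nc}$ such that for $A_i\in\ker\delta$ in factor $\epsilon_i\in\{1,2\}$, $\epsilon_i\ne\epsilon_{i+1}$, $(\phi\otimes\psi)(A_1\cdots A_m)=\phi(\prod_{\epsilon_i=1}A_i)\psi(\prod_{\epsilon_i=2}A_i)$ (ordered products); equivalently $\phi\star_T\psi(u^{\epsilon_1}_{i_1j_1}\cdots u^{\epsilon_r}_{i_rj_r})=\sum_{k_1,\dots,k_r}\phi(u^{\epsilon_1}_{i_1k_1}\cdots u^{\epsilon_r}_{i_rk_r})\psi(u^{\epsilon_1}_{k_1j_1}\cdots u^{\epsilon_r}_{k_rj_r})$. A state is tracial if $\phi(ab)=\phi(ba)$; the tensor Haar trace is a tracial state $h$ with $\phi\star_Th=h=h\star_T\phi$ for all tracial $\phi$. Definition of $h$: let $H=\ell^2(\mathbb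 Z)\otimes\bigotimes_{k\in\mathbb Z}M_n(\mathbb C)$ ($M_n(\mathbb C)$ with inner product $\mathrm{Tr}(A^*B)/n$, infinite tensor product with reference vector $I_n$); $U_{ij}(\delta_k\otimes(\cdots\otimes M_k\otimes\cdots))=\delta_{k+1}\otimes(\cdots\otimes E_{ji}M_k\otimes\cdots)$ (factor at position $k$ multiplied), $U_{ij}^*(\delta_k\otimes(\cdots\otimes M_{k-1}\otimes\cdots))=\delta_{k-1}\otimes(\cdots\otimes E_{ij}M_{k-1}\otimes\cdots)$; $j(u_{ij})=U_{ij}$ extends to a unital $*$-homomorphism $U_n^{nc}\to B(H)$; $h(a)=\langle\Omega,j(a)\Omega\rangle$ with $\Omega=\delta_0\otimes\bigotimes_kI_n$. *)

theory Defs
  imports "HOL-Analysis.Analysis"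
begin

text \<open>Letters of the free *-algebra on generators u_ij (indices in the finite type 'n, so
  n = CARD('n)): (i, j, False) stands for u_ij and (i, j, True) for u_ij^*.
  A word is a monomial; a functional on U_n^nc is given by its values on words.\<close>

type_synonym 'n letter = "'n \<times> 'n \<times> bool"
type_synonym 'n word = "'n letter list"
type_synonym 'n functional = "'n word \<Rightarrow> complex"

definition wstar :: "'n word \<Rightarrow> 'n word" where
  "wstar w = rev (map (\<lambda>(i, j, b). (i, j, \<not> b)) w)"

text \<open>Noncommutative polynomials: finitely supported functions word => complex.\<close>

definition nc_mult :: "('n word \<Rightarrow> complex) \<Rightarrow> ('n word \<Rightarrow> complex) \<Rightarrow> 'n word \<Rightarrow> complex" where
  "nc_mult p q w = (\<Sum>k\<in>{0..length w}. p (take k w) * q (drop k w))"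

definition nc_star :: "('n word \<Rightarrow> complex) \<Rightarrow> 'n word \<Rightarrow> complex" where
  "nc_star p w = cnj (p (wstar w))"

definition ext_fun :: "'n functional \<Rightarrow> ('n word \<Rightarrow> complex) \<Rightarrow> complex" where
  "ext_fun \<phi> p = (\<Sum>w\<in>{w. p w \<noteq> 0}. p w * \<phi> w)"

text \<open>The functional vanishes on the two-sided ideal generated by the unitarity relations
  sum_k u_ki^* u_kj = delta_ij = sum_k u_ik u_jk^*, i.e. it is a functional on U_n^nc.\<close>

definition respects_relations :: "('n::finite) functional \<Rightarrow> bool" where
  "respects_relations \<phi> \<longleftrightarrow>
     (\<forall>a b i j.
        (\<Sum>k\<in>UNIV. \<phi> (a @ [(k, i, True), (k, j, False)] @ b)) = (if i = j then \<phi> (a @ b) else 0)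
      \<and> (\<Sum>k\<in>UNIV. \<phi> (a @ [(i, k, False), (j, k, True)] @ b)) = (if i = j then \<phi> (a @ b) else 0))"

definition is_state :: "('n::finite) functional \<Rightarrow> bool" where
  "is_state \<phi> \<longleftrightarrow> respects_relations \<phi> \<and> \<phi> [] = 1 \<and>
     (\<forall>p. finite {w. p w \<noteq> 0} \<longrightarrow>
        Im (ext_fun \<phi> (nc_mult (nc_star p) p)) = 0 \<and> Re (ext_fun \<phi> (nc_mult (nc_star p) p)) \<ge> 0)"

text \<open>Traciality phi(ab) = phi(ba); by linearity it suffices to check it on monomials.\<close>

definition tracial :: "'n functional \<Rightarrow> bool" where
  "tracial \<phi> \<longleftrightarrow> (\<forall>a b. \<phi> (a @ b) = \<phi> (b @ a))"

definition tconv :: "('n::finite) functional \<Rightarrow> 'n functional \<Rightarrow> 'n functional" where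
  "tconv \<phi> \<psi> w = (\<Sum>ks\<in>{ks. length ks = length w}.
      \<phi> (map2 (\<lambda>(i, j, e) k. (i, k, e)) w ks) * \<psi> (map2 (\<lambda>(i, j, e) k. (k, j, e)) w ks))"

definition is_tensor_haar_trace :: "('n::finite) functional \<Rightarrow> bool" where
  "is_tensor_haar_trace h \<longleftrightarrow> is_state h \<and> tracial h \<and>
     (\<forall>\<phi>. is_state \<phi> \<and> tracial \<phi> \<longrightarrow> tconv \<phi> h = h \<and> tconv h \<phi> = h)"

text \<open>The model: vectors delta_k (x) (tensor of matrices M_m, all but finitely many = I_n).\<close>

definition matunit :: "'n::finite \<Rightarrow> 'n \<Rightarrow> complex^'n^'n" where
  "matunit a b = (\<chi> x y. if x = a \<and> y = b then 1 else 0)"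

definition mtrace :: "complex^'n^'n \<Rightarrow> complex" where
  "mtrace A = (\<Sum>i\<in>UNIV. A $ i $ i)"

fun model_step :: "('n::finite) letter \<Rightarrow> int \<times> (int \<Rightarrow> complex^'n^'n) \<Rightarrow> int \<times> (int \<Rightarrow> complex^'n^'n)" where
  "model_step (i, j, False) (k, M) = (k + 1, M(k := matunit j i ** M k))"
| "model_step (i, j, True) (k, M) = (k - 1, M(k - 1 := matunit i j ** M (k - 1)))"

text \<open>j(w) Omega for Omega = delta_0 (x) (I_n everywhere); operators act right to left.\<close>

definition model_vec :: "('n::finite) word \<Rightarrow> int \<times> (int \<Rightarrow> complex^'n^'n)" where
  "model_vec w = foldr model_step w (0, \<lambda>_. mat 1)"

text \<open>h(w) = <Omega, j(w) Omega>, with the normalised inner product Tr(A^* B)/n on each factor.\<close>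

definition haar_h :: "('n::finite) functional" where
  "haar_h w = (case model_vec w of (k, M) \<Rightarrow>
     if k = 0 then (\<Prod>m\<in>{m. M m \<noteq> mat 1}. mtrace (M m) / of_nat CARD('n)) else 0)"

end

theory Submission
  imports Defs
begin

fun lsh :: "'n letter \<Rightarrow> int" where "lsh (i,j,e) = (if e then -1 else 1)"
definition dsh :: "'n word \<Rightarrow> int" where "dsh w = sum_list (map lsh w)"

lemma dsh_simps[simp]: "dsh [] = 0" "dsh (l # w) = lsh l + dsh w" "dsh (v @ w) = dsh v + dsh w"
  by (simp_all add: dsh_def)

fun Sm :: "('n::finite) letter \<Rightarrow> int \<Rightarrow> int \<Rightarrow> complex^'n^'n" where
  "Sm (i,j,e) h m = (if e then (if m = h - 1 then matunit i j else mat 1)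
                     else (if m = h then matunit j i else mat 1))"

primrec Qm :: "('n::finite) word \<Rightarrow> int \<Rightarrow> int \<Rightarrow> complex^'n^'n" where
  "Qm [] k m = mat 1"
| "Qm (l # w) k m = Sm l (k + dsh w) m ** Qm w k m"

lemma foldr_model: "foldr model_step w (k, M) = (k + dsh w, \<lambda>m. Qm w k m ** M m)"
proof (induction w)
  case Nil then show ?case by simp
next
  case (Cons l w)
  obtain i j e where l: "l = (i,j,e)" by (cases l) auto
  show ?case using Cons
    by (cases e) (auto simp: l fun_eq_iff matrix_mul_assoc)
qed

lemma model_vec_Qm: "model_vec w = (dsh w, Qm w 0)"
  unfolding model_vec_def by (simp add: foldr_model)

definition trprod :: "(int \<Rightarrow> complex^('n::finite)^'n) \<Rightarrow> complex" where
  "trprod F = (\<Prod>m\<in>{m. F m \<noteq> mat 1}. mtrace (F m) / of_nat CARD('n))"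

lemma haar_Qm: "haar_h w = (if dsh w = 0 then trprod (Qm w 0) else 0)"
  unfolding haar_h_def model_vec_Qm trprod_def by simp

lemma matunit_mult: "matunit a b ** matunit c d = (if b = c then matunit a d else (0::complex^'n^'n))"
proof -
  have e: "(if x = a \<and> z = b then 1 else 0) * (if z = c \<and> y = d then 1 else 0)
     = (if z = b then (if x = a \<and> b = c \<and> y = d then 1 else 0) else (0::complex))" for x y z
    by auto
  show ?thesis
    unfolding vec_eq_iff matrix_matrix_mult_def matunit_def
    by (simp only: vec_lambda_beta e sum.delta finite UNIV_I if_True) auto
qed

lemma mtrace_comm: "mtrace (A ** B) = mtrace (B ** (A::complex^'n^'n))"
  unfolding mtrace_def matrix_matrix_mult_def
  apply simp
  apply (subst sum.swap)
  apply (simp add: mult.commute)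
  done

lemma mtrace_mat1[simp]: "mtrace (mat 1 :: complex^'n^'n) = of_nat CARD('n::finite)"
  by (simp add: mtrace_def mat_def)

lemma mtrace_0[simp]: "mtrace (0 :: complex^'n^'n) = 0"
  by (simp add: mtrace_def)

lemma mat1_ne0: "(mat 1 :: complex^'n^'n) \<noteq> 0"
proof
  assume "(mat 1 :: complex^'n^'n) = 0"
  then have "(mat 1 :: complex^'n^'n) $ undefined $ undefined = 0" by simp
  then show False by (simp add: mat_def)
qed

lemma mtrace_unit: "mtrace (X ** matunit k k) = X $ k $ (k::'n::finite)"
proof -
  have "(X ** matunit k k) $ i $ i = (if i = k then X $ k $ k else 0)" for i
  proof (cases "i = k")
    case True
    have "(\<Sum>ka\<in>UNIV. X $ k $ ka * (if ka = k then 1 else 0)) = (\<Sum>ka\<in>UNIV. if ka = k then X $ k $ ka else 0)"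
      by (rule sum.cong) auto
    then show ?thesis using True by (simp add: matrix_matrix_mult_def matunit_def)
  qed (simp add: matrix_matrix_mult_def matunit_def)
  then show ?thesis by (simp add: mtrace_def)
qed

lemma card_pos_c: "(of_nat CARD('n::finite) :: complex) \<noteq> 0" by simp

lemma trprod_superset:
  assumes "finite S" "{m. F m \<noteq> mat 1} \<subseteq> S"
  shows "trprod (F :: int \<Rightarrow> complex^'n^'n) = (\<Prod>m\<in>S. mtrace (F m) / of_nat CARD('n::finite))"
  unfolding trprod_def
  by (rule prod.mono_neutral_left) (use assms in auto)

lemma trprod_zero:
  assumes "finite {m. F m \<noteq> mat 1}" "F p = 0"
  shows "trprod (F :: int \<Rightarrow> complex^'n^'n) = 0"
  unfolding trprod_def
  by (rule prod_zero[OF assms(1)], rule bexI[of _ p]) (use assms mat1_ne0[where 'n='n] in auto)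

lemma abs_dsh: "\<bar>dsh w\<bar> \<le> int (length w)"
  by (induction w) (auto simp: abs_le_iff split: prod.splits)

lemma lsh_abs: "lsh l = 1 \<or> lsh l = -1"
  by (cases l) auto

lemma Sm_supp: "Sm l h m \<noteq> mat 1 \<Longrightarrow> m = h \<or> m = h - 1"
  by (cases l) (auto split: if_splits)

lemma Q_supp: "{m. Qm w k m \<noteq> mat 1} \<subseteq> {k - int (length w) .. k + int (length w)}"
proof (induction w)
  case Nil then show ?case by simp
next
  case (Cons l w)
  have "Qm (l#w) k m = mat 1" if "m \<notin> {k - int (length (l#w)) .. k + int (length (l#w))}" for m
  proof -
    have "Qm w k m = mat 1" using Cons that by auto
    moreover have "Sm l (k + dsh w) m = mat 1"
    proof (rule ccontr)
      assume "Sm l (k + dsh w) m \<noteq> mat 1"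
      then have "m = k + dsh w \<or> m = k + dsh w - 1" by (rule Sm_supp)
      then show False using abs_dsh[of w] that by auto
    qed
    ultimately show ?thesis by simp
  qed
  then show ?case by blast
qed

lemma Q_fin: "finite {m. Qm w k m \<noteq> mat 1}"
  by (rule finite_subset[OF Q_supp]) simp

lemma Sm_shift: "Sm l (h + c) (m + c) = Sm l h m"
  by (cases l) auto

lemma Q_shift: "Qm w (k + c) (m + c) = Qm w k m"
proof (induction w)
  case (Cons l w)
  have "Sm l (k + c + dsh w) (m + c) = Sm l (k + dsh w) m"
    using Sm_shift[of l "k + dsh w" c m] by (simp add: algebra_simps)
  then show ?case using Cons by simp
qed simp

lemma Q_append: "Qm (v @ w) k m = Qm v (k + dsh w) m ** Qm w k m"
  by (induction v) (auto simp: matrix_mul_assoc add.assoc)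

lemma trprod_shift: "trprod (\<lambda>m. F (m + t)) = trprod (F :: int \<Rightarrow> complex^'n^'n)"
  unfolding trprod_def
  by (rule prod.reindex_bij_witness[of _ "\<lambda>m. m - t" "\<lambda>m. m + t"]) auto

lemma trprod_comm:
  assumes "finite {m. A m \<noteq> mat 1}" "finite {m. B m \<noteq> mat 1}"
  shows "trprod (\<lambda>m. A m ** B m) = trprod (\<lambda>m. B m ** (A m :: complex^'n^'n))"
proof -
  let ?S = "{m. A m \<noteq> mat 1} \<union> {m. B m \<noteq> mat 1}"
  have f: "finite ?S" using assms by simp
  have "trprod (\<lambda>m. A m ** B m) = (\<Prod>m\<in>?S. mtrace (A m ** B m) / of_nat CARD('n))"
    by (rule trprod_superset[OF f]) auto
  also have "\<dots> = (\<Prod>m\<in>?S. mtrace (B m ** A m) / of_nat CARD('n))"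
    by (simp add: mtrace_comm)
  also have "\<dots> = trprod (\<lambda>m. B m ** A m)"
    by (rule trprod_superset[OF f, symmetric]) auto
  finally show ?thesis .
qed

lemma Q_append_fun: "Qm (v @ w) k = (\<lambda>m. Qm v (k + dsh w) m ** Qm w k m)"
  by (simp add: fun_eq_iff Q_append)

lemma haar_tracial: "haar_h (a @ b) = haar_h (b @ a)"
proof (cases "dsh a + dsh b = 0")
  case False then show ?thesis by (simp add: haar_Qm add.commute)
next
  case True
  define t where "t = dsh b"
  have da: "dsh a = - t" using True t_def by simp
  have "haar_h (b @ a) = trprod (\<lambda>m. Qm b (dsh a) m ** Qm a 0 m)"
    using True by (simp add: haar_Qm Q_append_fun add.commute)
  also have "\<dots> = trprod (\<lambda>m. Qm b 0 (m + t) ** Qm a t (m + t))"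
  proof -
    have "Qm b (-t) m = Qm b 0 (m + t)" for m using Q_shift[of b 0 "-t" "m+t"] by simp
    moreover have "Qm a 0 m = Qm a t (m + t)" for m using Q_shift[of a 0 t m] by simp
    ultimately show ?thesis using da by simp
  qed
  also have "\<dots> = trprod (\<lambda>m. Qm b 0 m ** Qm a t m)"
    by (rule trprod_shift[where F="\<lambda>m. Qm b 0 m ** Qm a t m"])
  also have "\<dots> = trprod (\<lambda>m. Qm a t m ** Qm b 0 m)"
    by (rule trprod_comm[OF Q_fin Q_fin])
  also have "\<dots> = haar_h (a @ b)"
    using True by (simp add: haar_Qm Q_append_fun t_def)
  finally show ?thesis by simp
qed

lemma trprod_rel:
  fixes A B :: "int \<Rightarrow> complex^'n::finite^'n"
  assumes fA: "finite {m. A m \<noteq> mat 1}" and fB: "finite {m. B m \<noteq> mat 1}"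
  shows "(\<Sum>k\<in>UNIV. trprod (\<lambda>m. if m = p then A m ** ((matunit k i ** matunit j k) ** B m) else A m ** B m))
       = (if i = j then trprod (\<lambda>m. A m ** B m) else 0)"
proof -
  let ?S = "{m. A m \<noteq> mat 1} \<union> {m. B m \<noteq> mat 1} \<union> {p}"
  have fS: "finite ?S" using fA fB by simp
  let ?c = "\<lambda>X::complex^'n^'n. mtrace X / of_nat CARD('n)"
  show ?thesis
  proof (cases "i = j")
    case False
    have "trprod (\<lambda>m. if m = p then A m ** ((matunit k i ** matunit j k) ** B m) else A m ** B m) = 0" for k
      by (rule trprod_zero[where p=p], rule finite_subset[OF _ fS]) (use False in \<open>auto simp: matunit_mult\<close>)
    then show ?thesis using False by simp
  next
    case True
    have eq1: "trprod (\<lambda>m. if m = p then A m ** ((matunit k i ** matunit j k) ** B m) else A m ** B m)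
        = ?c (A p ** (matunit k k ** B p)) * (\<Prod>m\<in>?S - {p}. ?c (A m ** B m))" for k
    proof -
      have "trprod (\<lambda>m. if m = p then A m ** ((matunit k i ** matunit j k) ** B m) else A m ** B m)
          = (\<Prod>m\<in>?S. ?c (if m = p then A m ** ((matunit k i ** matunit j k) ** B m) else A m ** B m))"
        by (rule trprod_superset[OF fS]) auto
      also have "\<dots> = ?c (A p ** (matunit k k ** B p)) * (\<Prod>m\<in>?S - {p}. ?c (A m ** B m))"
        by (subst prod.remove[OF fS, of p]) (auto simp: True matunit_mult intro!: prod.cong)
      finally show ?thesis .
    qed
    have tr: "mtrace (A p ** (matunit k k ** B p)) = (B p ** A p) $ k $ k" for k
    proof -
      have "mtrace (A p ** (matunit k k ** B p)) = mtrace ((A p ** matunit k k) ** B p)"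
        by (simp add: matrix_mul_assoc)
      also have "\<dots> = mtrace (B p ** (A p ** matunit k k))" by (rule mtrace_comm)
      also have "\<dots> = mtrace ((B p ** A p) ** matunit k k)" by (simp add: matrix_mul_assoc)
      also have "\<dots> = (B p ** A p) $ k $ k" by (rule mtrace_unit)
      finally show ?thesis .
    qed
    have s1: "(\<Sum>k\<in>UNIV. ?c (A p ** (matunit k k ** B p))) = ?c (A p ** B p)"
      by (simp add: tr sum_divide_distrib[symmetric] mtrace_def[of "B p ** A p", symmetric] mtrace_comm)
    have "(\<Sum>k\<in>UNIV. trprod (\<lambda>m. if m = p then A m ** ((matunit k i ** matunit j k) ** B m) else A m ** B m))
        = (\<Sum>k\<in>UNIV. ?c (A p ** (matunit k k ** B p)) * (\<Prod>m\<in>?S - {p}. ?c (A m ** B m)))"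
      by (simp only: eq1)
    also have "\<dots> = (\<Sum>k\<in>UNIV. ?c (A p ** (matunit k k ** B p))) * (\<Prod>m\<in>?S - {p}. ?c (A m ** B m))"
      by (rule sum_distrib_right[symmetric])
    also have "\<dots> = ?c (A p ** B p) * (\<Prod>m\<in>?S - {p}. ?c (A m ** B m))"
      by (simp only: s1)
    also have "\<dots> = (\<Prod>m\<in>?S. ?c (A m ** B m))"
      by (subst prod.remove[OF fS, of p]) auto
    also have "\<dots> = trprod (\<lambda>m. A m ** B m)"
      by (rule trprod_superset[OF fS, symmetric]) auto
    finally show ?thesis using True by simp
  qed
qed

lemma Q_rel1: "Qm (a @ [(k,i,True),(k,j,False)] @ b) 0 =
   (\<lambda>m. if m = dsh b then Qm a (dsh b) m ** ((matunit k i ** matunit j k) ** Qm b 0 m) else Qm a (dsh b) m ** Qm b 0 m)"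
  by (auto simp: fun_eq_iff Q_append matrix_mul_assoc)

lemma Q_rel2: "Qm (a @ [(i,k,False),(j,k,True)] @ b) 0 =
   (\<lambda>m. if m = dsh b - 1 then Qm a (dsh b) m ** ((matunit k i ** matunit j k) ** Qm b 0 m) else Qm a (dsh b) m ** Qm b 0 m)"
  by (auto simp: fun_eq_iff Q_append matrix_mul_assoc)

lemma Q_ab: "Qm (a @ b) 0 = (\<lambda>m. Qm a (dsh b) m ** Qm b 0 m)"
  by (simp add: fun_eq_iff Q_append)

lemma haar_rel: "respects_relations (haar_h :: ('n::finite) functional)"
  unfolding respects_relations_def
proof (intro allI conjI)
  fix a b :: "'n word" and i j :: 'n
  show "(\<Sum>k\<in>UNIV. haar_h (a @ [(k, i, True), (k, j, False)] @ b)) = (if i = j then haar_h (a @ b) else 0)"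
    unfolding haar_Qm Q_rel1 unfolding Q_ab
    using trprod_rel[where A="Qm a (dsh b)" and B="Qm b 0" and p="dsh b" and i=i and j=j, OF Q_fin Q_fin] by simp
  show "(\<Sum>k\<in>UNIV. haar_h (a @ [(i, k, False), (j, k, True)] @ b)) = (if i = j then haar_h (a @ b) else 0)"
    unfolding haar_Qm Q_rel2 unfolding Q_ab
    using trprod_rel[where A="Qm a (dsh b)" and B="Qm b 0" and p="dsh b - 1" and i=i and j=j, OF Q_fin Q_fin] by simp
qed

lemma haar_nil: "haar_h [] = 1"
proof -
  have "Qm [] 0 = (\<lambda>m. mat 1)" by (simp add: fun_eq_iff)
  then show ?thesis by (simp add: haar_Qm trprod_def)
qed

definition madj :: "complex^'n^'n \<Rightarrow> complex^'n^'n" where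
  "madj A = (\<chi> i j. cnj (A $ j $ i))"

lemma madj_mult: "madj (A ** B) = madj B ** madj (A :: complex^'n::finite^'n)"
  by (simp add: madj_def matrix_matrix_mult_def vec_eq_iff mult.commute)

lemma madj_1[simp]: "madj (mat 1 :: complex^'n^'n) = mat 1"
  by (simp add: madj_def mat_def vec_eq_iff)

lemma madj_unit: "madj (matunit a b) = matunit b a"
  by (auto simp: madj_def matunit_def vec_eq_iff)

fun lstar :: "'n letter \<Rightarrow> 'n letter" where "lstar (i,j,e) = (i,j,\<not> e)"

lemma wstar_Nil[simp]: "wstar [] = []" by (simp add: wstar_def)
lemma wstar_Cons[simp]: "wstar (l # v) = wstar v @ [lstar l]"
  by (cases l) (simp add: wstar_def)
lemma wstar_append: "wstar (v @ w) = wstar w @ wstar v"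
  by (simp add: wstar_def)
lemma wstar_wstar[simp]: "wstar (wstar v) = v"
  by (induction v) (auto simp: wstar_append)
lemma dsh_wstar[simp]: "dsh (wstar v) = - dsh v"
proof (induction v)
  case (Cons l v) then show ?case by (cases l) auto
qed simp

lemma Sm_star: "Sm (lstar l) (h + lsh l) m = madj (Sm l h m)"
  by (cases l) (auto simp: madj_unit)

lemma Q_wstar: "Qm (wstar v) (k + dsh v) m = madj (Qm v k m)"
proof (induction v arbitrary: k)
  case Nil then show ?case by simp
next
  case (Cons l v)
  obtain i j e where l: "l = (i,j,e)" by (cases l) auto
  have "Qm (wstar (l # v)) (k + dsh (l # v)) m
      = Qm (wstar v) (k + dsh v) m ** Sm (lstar l) (k + dsh v + lsh l) m"
    by (simp add: Q_append l algebra_simps)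
  also have "\<dots> = madj (Qm v k m) ** madj (Sm l (k + dsh v) m)"
    by (simp add: Cons Sm_star)
  also have "\<dots> = madj (Qm (l # v) k m)" by (simp add: madj_mult)
  finally show ?case .
qed

lemma haar_wstar: "haar_h (wstar v @ w) =
   (if dsh v = dsh w then trprod (\<lambda>m. madj (Qm v 0 m) ** Qm w 0 m) else 0)"
proof -
  have "Qm (wstar v @ w) 0 = (\<lambda>m. madj (Qm v 0 m) ** Qm w 0 m)" if "dsh v = dsh w"
    using Q_wstar[of v 0] that by (simp add: fun_eq_iff Q_append)
  then show ?thesis by (simp add: haar_Qm)
qed

lemma mtrace_adj: "mtrace (madj A ** B) = (\<Sum>(x,y)\<in>UNIV \<times> UNIV. cnj (A $ y $ x) * B $ y $ x)"
proof -
  have "mtrace (madj A ** B) = (\<Sum>x\<in>UNIV. \<Sum>y\<in>UNIV. cnj (A $ y $ x) * B $ y $ x)"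
    by (simp add: mtrace_def matrix_matrix_mult_def madj_def)
  also have "\<dots> = (\<Sum>(x,y)\<in>UNIV \<times> UNIV. cnj (A $ y $ x) * B $ y $ x)"
    by (rule sum.cartesian_product)
  finally show ?thesis .
qed

lemma gram_nonneg:
  fixes K :: "'a \<Rightarrow> 'a \<Rightarrow> complex" and X :: "'a \<Rightarrow> 'b \<Rightarrow> complex"
  assumes "finite V" "finite I" "\<And>v w. v \<in> V \<Longrightarrow> w \<in> V \<Longrightarrow> K v w = of_real c * (\<Sum>i\<in>I. cnj (X v i) * X w i)"
  shows "(\<Sum>v\<in>V. \<Sum>w\<in>V. cnj (p v) * p w * K v w) = of_real (c * (\<Sum>i\<in>I. (cmod (\<Sum>w\<in>V. p w * X w i))^2))"
proof -
  have "of_real (c * (\<Sum>i\<in>I. (cmod (\<Sum>w\<in>V. p w * X w i))^2))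
      = of_real c * (\<Sum>i\<in>I. cnj (\<Sum>v\<in>V. p v * X v i) * (\<Sum>w\<in>V. p w * X w i))"
  proof -
    have n: "complex_of_real ((cmod z)^2) = cnj z * z" for z
      by (simp only: complex_norm_square mult.commute)
    show ?thesis by (simp only: of_real_mult of_real_sum n)
  qed
  also have "\<dots> = of_real c * (\<Sum>i\<in>I. \<Sum>v\<in>V. \<Sum>w\<in>V. cnj (p v) * p w * (cnj (X v i) * X w i))"
    by (simp only: cnj_sum sum_product) (simp add: mult_ac)
  also have "\<dots> = of_real c * (\<Sum>v\<in>V. \<Sum>w\<in>V. \<Sum>i\<in>I. cnj (p v) * p w * (cnj (X v i) * X w i))"
    by (simp add: sum.swap[of _ I] sum.swap[of _ I V])
  also have "\<dots> = (\<Sum>v\<in>V. \<Sum>w\<in>V. cnj (p v) * p w * K v w)"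
    by (simp add: assms(3) sum_distrib_left sum_distrib_right algebra_simps cong: sum.cong)
  finally show ?thesis by simp
qed

definition coef :: "int set \<Rightarrow> ('n::finite) word \<Rightarrow> (int \<Rightarrow> 'n \<times> 'n) \<Rightarrow> complex" where
  "coef S w g = (\<Prod>m\<in>S. Qm w 0 m $ snd (g m) $ fst (g m))"

lemma haar_K:
  fixes v w :: "('n::finite) word"
  assumes fS: "finite S" and sv: "{m. Qm v 0 m \<noteq> mat 1} \<subseteq> S" and sw: "{m. Qm w 0 m \<noteq> mat 1} \<subseteq> S"
    and fT: "finite T" and vT: "dsh v \<in> T"
  shows "haar_h (wstar v @ w) = of_real (1 / real CARD('n) ^ card S) *
     (\<Sum>tg\<in>T \<times> PiE S (\<lambda>_. UNIV). cnj (if dsh v = fst tg then coef S v (snd tg) else 0) *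
          (if dsh w = fst tg then coef S w (snd tg) else 0))"
proof -
  let ?G = "PiE S (\<lambda>_. UNIV :: ('n \<times> 'n) set)"
  have fG: "finite ?G" using fS by (simp add: finite_PiE)
  have rhs: "(\<Sum>tg\<in>T \<times> ?G. cnj (if dsh v = fst tg then coef S v (snd tg) else 0) *
          (if dsh w = fst tg then coef S w (snd tg) else 0))
     = (if dsh v = dsh w then (\<Sum>g\<in>?G. cnj (coef S v g) * coef S w g) else 0)"
  proof -
    have "(\<Sum>tg\<in>T \<times> ?G. cnj (if dsh v = fst tg then coef S v (snd tg) else 0) *
          (if dsh w = fst tg then coef S w (snd tg) else 0))
       = (\<Sum>t\<in>T. \<Sum>g\<in>?G. cnj (if dsh v = t then coef S v g else 0) * (if dsh w = t then coef S w g else 0))"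
      by (simp add: sum.cartesian_product case_prod_beta)
    also have "\<dots> = (\<Sum>t\<in>T. if t = dsh v then (if dsh v = dsh w then (\<Sum>g\<in>?G. cnj (coef S v g) * coef S w g) else 0) else 0)"
      by (rule sum.cong) auto
    also have "\<dots> = (if dsh v = dsh w then (\<Sum>g\<in>?G. cnj (coef S v g) * coef S w g) else 0)"
      using fT vT by (simp add: sum.delta')
    finally show ?thesis .
  qed
  show ?thesis
  proof (cases "dsh v = dsh w")
    case False then show ?thesis by (simp add: haar_wstar rhs)
  next
    case True
    have "haar_h (wstar v @ w) = trprod (\<lambda>m. madj (Qm v 0 m) ** Qm w 0 m)"
      using True by (simp add: haar_wstar)
    also have "\<dots> = (\<Prod>m\<in>S. mtrace (madj (Qm v 0 m) ** Qm w 0 m) / of_nat CARD('n))"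
    proof (rule trprod_superset[OF fS])
      show "{m. madj (Qm v 0 m) ** Qm w 0 m \<noteq> mat 1} \<subseteq> S"
      proof
        fix m assume "m \<in> {m. madj (Qm v 0 m) ** Qm w 0 m \<noteq> mat 1}"
        then have "Qm v 0 m \<noteq> mat 1 \<or> Qm w 0 m \<noteq> mat 1" by auto
        then show "m \<in> S" using sv sw by auto
      qed
    qed
    also have "\<dots> = (\<Prod>m\<in>S. mtrace (madj (Qm v 0 m) ** Qm w 0 m)) / of_nat CARD('n) ^ card S"
      by (simp add: prod_dividef)
    also have "(\<Prod>m\<in>S. mtrace (madj (Qm v 0 m) ** Qm w 0 m))
       = (\<Prod>m\<in>S. \<Sum>xy\<in>UNIV. cnj (Qm v 0 m $ snd xy $ fst xy) * Qm w 0 m $ snd xy $ fst xy)"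
      by (simp add: mtrace_adj case_prod_beta)
    also have "\<dots> = (\<Sum>g\<in>?G. \<Prod>m\<in>S. cnj (Qm v 0 m $ snd (g m) $ fst (g m)) * Qm w 0 m $ snd (g m) $ fst (g m))"
      by (rule prod_sum_PiE[OF fS]) simp
    also have "\<dots> = (\<Sum>g\<in>?G. cnj (coef S v g) * coef S w g)"
      by (simp add: coef_def prod.distrib)
    finally have "haar_h (wstar v @ w) = (\<Sum>g\<in>?G. cnj (coef S v g) * coef S w g) / of_nat CARD('n) ^ card S" .
    then show ?thesis unfolding rhs using True by (simp add: divide_inverse mult.commute)
  qed
qed

lemma ext_gram:
  fixes p :: "('n::finite) word \<Rightarrow> complex"
  assumes fV: "finite {w. p w \<noteq> 0}"
  shows "ext_fun \<phi> (nc_mult (nc_star p) p) =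
    (\<Sum>v\<in>{w. p w \<noteq> 0}. \<Sum>w\<in>{w. p w \<noteq> 0}. cnj (p v) * p w * \<phi> (wstar v @ w))"
proof -
  define V where "V = {w. p w \<noteq> 0}"
  define Y where "Y = wstar ` V"
  define T where "T = (\<lambda>(y,z). y @ z) ` (Y \<times> V)"
  define q where "q = nc_mult (nc_star p) p"
  define F where "F = (\<lambda>y z. cnj (p (wstar y)) * p z * \<phi> (y @ z))"
  have fY: "finite Y" using fV by (simp add: Y_def V_def)
  have fT: "finite T" using fY fV by (simp add: T_def V_def)
  have q: "q x = (\<Sum>k\<in>{0..length x}. cnj (p (wstar (take k x))) * p (drop k x))" for x
    by (simp add: q_def nc_mult_def nc_star_def)
  have inY: "y \<in> Y" if "p (wstar y) \<noteq> 0" for y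
    using that unfolding Y_def V_def by (intro image_eqI[of _ _ "wstar y"]) auto
  have supp: "{x. q x \<noteq> 0} \<subseteq> T"
  proof
    fix x assume "x \<in> {x. q x \<noteq> 0}"
    then obtain k where "cnj (p (wstar (take k x))) * p (drop k x) \<noteq> 0"
      using q[of x] by (metis (mono_tags, lifting) mem_Collect_eq sum.neutral)
    then have "take k x \<in> Y" "drop k x \<in> V" using inY by (auto simp: V_def)
    then show "x \<in> T" unfolding T_def by (intro image_eqI[of _ _ "(take k x, drop k x)"]) auto
  qed
  have "ext_fun \<phi> q = (\<Sum>x\<in>T. q x * \<phi> x)"
    unfolding ext_fun_def by (rule sum.mono_neutral_left[OF fT supp]) auto
  also have "\<dots> = (\<Sum>x\<in>T. \<Sum>k\<in>{0..length x}. F (take k x) (drop k x))"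
    by (simp add: q sum_distrib_right F_def)
  also have "\<dots> = (\<Sum>(x,k)\<in>Sigma T (\<lambda>x. {0..length x}). F (take k x) (drop k x))"
    by (rule sum.Sigma[OF fT]) auto
  also have "\<dots> = (\<Sum>(x,k)\<in>(\<lambda>(y,z). (y @ z, length y)) ` (Y \<times> V). F (take k x) (drop k x))"
  proof (rule sum.mono_neutral_right)
    show "finite (Sigma T (\<lambda>x. {0..length x}))" using fT by auto
    show "(\<lambda>(y,z). (y @ z, length y)) ` (Y \<times> V) \<subseteq> Sigma T (\<lambda>x. {0..length x})"
      by (auto simp: T_def)
    show "\<forall>i\<in>Sigma T (\<lambda>x. {0..length x}) - (\<lambda>(y,z). (y @ z, length y)) ` (Y \<times> V).
            (case i of (x,k) \<Rightarrow> F (take k x) (drop k x)) = 0"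
    proof
      fix i assume i: "i \<in> Sigma T (\<lambda>x. {0..length x}) - (\<lambda>(y,z). (y @ z, length y)) ` (Y \<times> V)"
      obtain x k where ik: "i = (x,k)" by (cases i)
      have kl: "k \<le> length x" using i ik by auto
      show "(case i of (x,k) \<Rightarrow> F (take k x) (drop k x)) = 0"
      proof (rule ccontr)
        assume "(case i of (x,k) \<Rightarrow> F (take k x) (drop k x)) \<noteq> 0"
        then have "p (wstar (take k x)) \<noteq> 0" "p (drop k x) \<noteq> 0" by (auto simp: ik F_def)
        then have "(take k x, drop k x) \<in> Y \<times> V" using inY by (auto simp: V_def)
        then have "i \<in> (\<lambda>(y,z). (y @ z, length y)) ` (Y \<times> V)"
          using kl by (auto simp: ik intro!: image_eqI[of _ _ "(take k x, drop k x)"])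
        then show False using i by blast
      qed
    qed
  qed
  also have "\<dots> = (\<Sum>(y,z)\<in>Y \<times> V. F y z)"
  proof (subst sum.reindex)
    show "inj_on (\<lambda>(y,z). (y @ z, length y)) (Y \<times> V)"
      by (auto simp: inj_on_def)
  qed (auto simp: case_prod_beta intro!: sum.cong)
  also have "\<dots> = (\<Sum>y\<in>Y. \<Sum>z\<in>V. F y z)"
    by (rule sum.cartesian_product[symmetric])
  also have "\<dots> = (\<Sum>v\<in>V. \<Sum>z\<in>V. F (wstar v) z)"
    unfolding Y_def by (subst sum.reindex) (auto simp: inj_on_def dest: arg_cong[of _ _ wstar])
  also have "\<dots> = (\<Sum>v\<in>V. \<Sum>w\<in>V. cnj (p v) * p w * \<phi> (wstar v @ w))"
    by (simp add: F_def)
  finally show ?thesis by (simp add: q_def V_def)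
qed

lemma haar_state: "is_state (haar_h :: ('n::finite) functional)"
  unfolding is_state_def
proof (intro conjI allI impI haar_rel haar_nil)
  fix p :: "'n word \<Rightarrow> complex"
  assume fV: "finite {w. p w \<noteq> 0}"
  define V where "V = {w. p w \<noteq> 0}"
  define L where "L = (\<Sum>v\<in>V. length v)"
  define S where "S = {- int L .. int L}"
  define T where "T = dsh ` V"
  define c where "c = 1 / real CARD('n) ^ card S"
  define X where "X = (\<lambda>(v::'n word) tg. if dsh v = fst tg then coef S v (snd tg) else 0)"
  have fS: "finite S" by (simp add: S_def)
  have fT: "finite T" using fV by (simp add: T_def V_def)
  have sub: "{m. Qm v 0 m \<noteq> mat 1} \<subseteq> S" if "v \<in> V" for v
  proof -
    have "length v \<le> L" unfolding L_def using fV that by (intro member_le_sum) (auto simp: V_def)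
    then show ?thesis using Q_supp[of v 0] by (auto simp: S_def)
  qed
  have K: "haar_h (wstar v @ w) = of_real c * (\<Sum>tg\<in>T \<times> PiE S (\<lambda>_. UNIV). cnj (X v tg) * X w tg)"
    if "v \<in> V" "w \<in> V" for v w
    unfolding c_def X_def
    by (rule haar_K[OF fS sub[OF that(1)] sub[OF that(2)] fT]) (use that in \<open>auto simp: T_def\<close>)
  have fI: "finite (T \<times> PiE S (\<lambda>_. UNIV :: ('n \<times> 'n) set))" using fS fT by (simp add: finite_PiE)
  have e: "ext_fun haar_h (nc_mult (nc_star p) p) =
     of_real (c * (\<Sum>i\<in>T \<times> PiE S (\<lambda>_. UNIV). (cmod (\<Sum>w\<in>V. p w * X w i))^2))"
    unfolding ext_gram[OF fV] V_def[symmetric]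
    by (rule gram_nonneg[OF _ fI K]) (use fV V_def in auto)
  have c0: "c \<ge> 0" by (simp add: c_def)
  show "Im (ext_fun haar_h (nc_mult (nc_star p) p)) = 0" by (simp only: e Im_complex_of_real)
  show "Re (ext_fun haar_h (nc_mult (nc_star p) p)) \<ge> 0"
    by (simp only: e Re_complex_of_real) (use c0 in \<open>simp add: sum_nonneg\<close>)
qed

inductive dyck :: "'n word \<Rightarrow> bool" where
  dy_nil: "dyck []"
| dy_cons: "dyck D1 \<Longrightarrow> dyck D2 \<Longrightarrow> dyck (D2 @ [(a,b,True)] @ D1 @ [(c,d,False)])"

lemma dyck_dsh: "dyck c \<Longrightarrow> dsh c = 0"
  by (induction rule: dyck.induct) auto

lemma dyck_untouched: "dyck c \<Longrightarrow> m < k \<Longrightarrow> Qm c k m = mat 1"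
proof (induction c arbitrary: k rule: dyck.induct)
  case dy_nil then show ?case by simp
next
  case (dy_cons D1 D2 a b c d)
  have "Qm D1 (k + 1) m = mat 1" using dy_cons by simp
  moreover have "Qm D2 k m = mat 1" using dy_cons by simp
  ultimately show ?case using dy_cons.prems dyck_dsh[OF dy_cons.hyps(1)] dyck_dsh[OF dy_cons.hyps(2)]
    by (simp add: Q_append)
qed

lemma Q_pair:
  assumes "dyck c"
  shows "Qm (a @ (i',k',True) # c @ (i,k,False) # b) 0 =
    (\<lambda>m. if m = dsh b then Qm a (dsh b) m ** ((matunit i' k' ** matunit k i) ** Qm b 0 m)
         else Qm a (dsh b) m ** (Qm c (dsh b + 1) m ** Qm b 0 m))"
proof -
  have dc: "dsh c = 0" using dyck_dsh[OF assms] .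
  have u: "Qm c (dsh b + 1) (dsh b) = mat 1" using dyck_untouched[OF assms] by simp
  show ?thesis
    using dc u by (auto simp: fun_eq_iff Q_append matrix_mul_assoc algebra_simps)
qed

lemma haar_pair:
  assumes "dyck c"
  shows "haar_h (a @ (i',k',True) # c @ (i,k,False) # b) =
    (if k = k' then haar_h (a @ (i',c0,True) # c @ (i,c0,False) # b) else 0)"
proof (cases "k = k'")
  case True
  have "Qm (a @ (i',k',True) # c @ (i,k,False) # b) 0 = Qm (a @ (i',c0,True) # c @ (i,c0,False) # b) 0"
    unfolding Q_pair[OF assms] by (rule ext) (simp add: True matunit_mult)
  then show ?thesis using True by (simp add: haar_Qm)
next
  case False
  have "trprod (Qm (a @ (i',k',True) # c @ (i,k,False) # b) 0) = 0"
    by (rule trprod_zero[OF Q_fin, of _ _ "dsh b"]) (use False in \<open>simp add: Q_pair[OF assms] matunit_mult\<close>)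
  then show ?thesis using False by (simp add: haar_Qm)
qed

lemma pair_core:
  assumes rel: "respects_relations \<phi>" and dc: "dyck c"
  shows "(\<Sum>k'\<in>UNIV. \<Sum>k\<in>UNIV. haar_h (a @ (i',k',True) # c @ (i,k,False) # b) *
            \<phi> (a2 @ (k',j',True) # (k,j,False) # b2))
       = haar_h (a @ (i',j',True) # c @ (i,j,False) # b) * \<phi> (a2 @ b2)"
proof -
  define H0 where "H0 = haar_h (a @ (i',j,True) # c @ (i,j,False) # b)"
  have H: "haar_h (a @ (i',k',True) # c @ (i,k,False) # b) = (if k = k' then H0 else 0)" for k k'
    unfolding H0_def by (rule haar_pair[OF dc])
  have "(\<Sum>k'\<in>UNIV. \<Sum>k\<in>UNIV. haar_h (a @ (i',k',True) # c @ (i,k,False) # b) *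
            \<phi> (a2 @ (k',j',True) # (k,j,False) # b2))
      = (\<Sum>k'\<in>UNIV. H0 * \<phi> (a2 @ (k',j',True) # (k',j,False) # b2))"
    by (simp add: H if_distrib if_distribR sum.delta cong: if_cong)
  also have "\<dots> = H0 * (\<Sum>k'\<in>UNIV. \<phi> (a2 @ [(k',j',True), (k',j,False)] @ b2))"
    by (simp add: sum_distrib_left)
  also have "\<dots> = H0 * (if j' = j then \<phi> (a2 @ b2) else 0)"
    using rel unfolding respects_relations_def by simp
  also have "\<dots> = haar_h (a @ (i',j',True) # c @ (i,j,False) # b) * \<phi> (a2 @ b2)"
    using haar_pair[OF dc, of a i' j' i j b j] by (auto simp: H0_def)
  finally show ?thesis .
qed

datatype 'n slot = Fr "'n letter" | Fx "'n letter"

fun nfree :: "'n slot list \<Rightarrow> nat" where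
  "nfree [] = 0"
| "nfree (Fr l # ws) = Suc (nfree ws)"
| "nfree (Fx l # ws) = nfree ws"

fun ins1 :: "'n slot list \<Rightarrow> 'n list \<Rightarrow> 'n word" where
  "ins1 [] ks = []"
| "ins1 (Fx l # ws) ks = l # ins1 ws ks"
| "ins1 (Fr (i,j,e) # ws) ks = (i, hd ks, e) # ins1 ws (tl ks)"

fun ins2 :: "'n slot list \<Rightarrow> 'n list \<Rightarrow> 'n word" where
  "ins2 [] ks = []"
| "ins2 (Fx l # ws) ks = ins2 ws ks"
| "ins2 (Fr (i,j,e) # ws) ks = (hd ks, j, e) # ins2 ws (tl ks)"

lemma nfree_append[simp]: "nfree (A @ B) = nfree A + nfree B"
proof (induction A)
  case (Cons s A) then show ?case by (cases s) auto
qed simp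

lemma nfree_Fx[simp]: "nfree (map Fx c) = 0"
  by (induction c) auto

lemma ins_append:
  "length ks1 = nfree A \<Longrightarrow> ins1 (A @ R) (ks1 @ ks) = ins1 A ks1 @ ins1 R ks"
  "length ks1 = nfree A \<Longrightarrow> ins2 (A @ R) (ks1 @ ks) = ins2 A ks1 @ ins2 R ks"
proof (induction A arbitrary: ks1)
  case (Cons s A)
  {
    case 1
    then show ?case
    proof (cases s)
      case (Fr l) then obtain i j e where "l = (i,j,e)" by (cases l) auto
      then show ?thesis using 1 Cons(1)[of "tl ks1"] Fr by (cases ks1) auto
    next
      case (Fx l) then show ?thesis using 1 Cons(1)[of ks1] by simp
    qed
  next
    case 2
    then show ?case
    proof (cases s)
      case (Fr l) then obtain i j e where "l = (i,j,e)" by (cases l) auto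
      then show ?thesis using 2 Cons(2)[of "tl ks1"] Fr by (cases ks1) auto
    next
      case (Fx l) then show ?thesis using 2 Cons(2)[of ks1] by simp
    qed
  }
qed simp_all

lemma ins_Fx[simp]: "ins1 (map Fx c @ R) ks = c @ ins1 R ks" "ins2 (map Fx c @ R) ks = ins2 R ks"
  by (induction c) auto

lemma ins_Fx'[simp]: "ins1 (map Fx c) ks = c" "ins2 (map Fx c) ks = []"
  by (induction c) auto

lemma sum_len_Suc:
  "(\<Sum>ks\<in>{ks. length ks = Suc n}. f ks) = (\<Sum>k\<in>(UNIV::'a::finite set). \<Sum>ks\<in>{ks. length ks = n}. f (k # ks))"
proof -
  have e: "{ks. length ks = Suc n} = (\<lambda>(k,ks). k # ks) ` (UNIV \<times> {ks :: 'a list. length ks = n})"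
    by (auto simp: length_Suc_conv)
  have i: "inj_on (\<lambda>(k,ks). k # ks) (UNIV \<times> {ks :: 'a list. length ks = n})"
    by (auto simp: inj_on_def)
  show ?thesis
    unfolding e sum.reindex[OF i] by (simp add: sum.cartesian_product case_prod_beta)
qed

lemma sum_len_add:
  "(\<Sum>ks\<in>{ks. length ks = a + b}. f ks) =
   (\<Sum>xs\<in>{xs. length xs = a}. \<Sum>ys\<in>{ys. length ys = b}. f (xs @ (ys :: 'a::finite list)))"
proof (induction a arbitrary: f)
  case 0
  have "{xs :: 'a list. length xs = 0} = {[]}" by auto
  then show ?case by simp
next
  case (Suc a)
  have "(\<Sum>ks\<in>{ks. length ks = Suc a + b}. f ks) = (\<Sum>k\<in>UNIV. \<Sum>ks\<in>{ks. length ks = a + b}. f (k # ks))"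
    using sum_len_Suc[where n="a + b" and f=f] by simp
  also have "\<dots> = (\<Sum>k\<in>UNIV. \<Sum>xs\<in>{xs. length xs = a}. \<Sum>ys\<in>{ys. length ys = b}. f (k # xs @ ys))"
    using Suc by simp
  also have "\<dots> = (\<Sum>xs\<in>{xs. length xs = Suc a}. \<Sum>ys\<in>{ys. length ys = b}. f (xs @ ys))"
    using sum_len_Suc[where n=a and f="\<lambda>xs. \<Sum>ys\<in>{ys. length ys = b}. f (xs @ ys)"] by simp
  finally show ?case .
qed

definition Gc :: "('n::finite) functional \<Rightarrow> 'n slot list \<Rightarrow> complex" where
  "Gc \<phi> ws = (\<Sum>ks\<in>{ks. length ks = nfree ws}. haar_h (ins1 ws ks) * \<phi> (ins2 ws ks))"

lemma Gc_Fx: "\<phi> [] = 1 \<Longrightarrow> Gc \<phi> (map Fx w) = haar_h w"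
proof -
  assume "\<phi> [] = 1"
  have "{ks :: 'n list. length ks = 0} = {[]}" by auto
  then show ?thesis using \<open>\<phi> [] = 1\<close> by (simp add: Gc_def)
qed

lemma ins_Fr: "length ks = length w \<Longrightarrow>
   ins1 (map Fr w) ks = map2 (\<lambda>(i, j, e) k. (i, k, e)) w ks \<and>
   ins2 (map Fr w) ks = map2 (\<lambda>(i, j, e) k. (k, j, e)) w ks"
proof (induction w arbitrary: ks)
  case (Cons l w)
  obtain i j e where l: "l = (i,j,e)" by (cases l) auto
  from Cons.prems obtain k ks' where "ks = k # ks'" by (cases ks) auto
  then show ?case using Cons l by simp
qed simp

lemma nfree_Fr[simp]: "nfree (map Fr w) = length w"
  by (induction w) auto

lemma Gc_Fr: "Gc \<phi> (map Fr w) = tconv haar_h \<phi> w"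
  unfolding Gc_def tconv_def by (rule sum.cong) (auto simp: ins_Fr)

lemma Gc_pair:
  assumes rel: "respects_relations \<phi>" and dc: "dyck c"
  shows "Gc \<phi> (A @ Fr (i',j',True) # map Fx c @ Fr (i,j,False) # B) =
         Gc \<phi> (A @ Fx (i',j',True) # map Fx c @ Fx (i,j,False) # B)"
proof -
  let ?L = "A @ Fr (i',j',True) # map Fx c @ Fr (i,j,False) # B"
  let ?R = "A @ Fx (i',j',True) # map Fx c @ Fx (i,j,False) # B"
  have fl: "ins1 ?L (ks1 @ k' # k # ks3) = ins1 A ks1 @ (i',k',True) # c @ (i,k,False) # ins1 B ks3"
       "ins2 ?L (ks1 @ k' # k # ks3) = ins2 A ks1 @ (k',j',True) # (k,j,False) # ins2 B ks3"
    if "length ks1 = nfree A" for ks1 k' k ks3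
    using that by (simp_all add: ins_append)
  have fr: "ins1 ?R (ks1 @ ks3) = ins1 A ks1 @ (i',j',True) # c @ (i,j,False) # ins1 B ks3"
       "ins2 ?R (ks1 @ ks3) = ins2 A ks1 @ ins2 B ks3"
    if "length ks1 = nfree A" for ks1 ks3
    using that by (simp_all add: ins_append)
  have nL: "nfree ?L = nfree A + Suc (Suc (nfree B))" by simp
  have nR: "nfree ?R = nfree A + nfree B" by simp
  have "Gc \<phi> ?L = (\<Sum>ks1\<in>{xs. length xs = nfree A}. \<Sum>ks\<in>{ys. length ys = Suc (Suc (nfree B))}.
        haar_h (ins1 ?L (ks1 @ ks)) * \<phi> (ins2 ?L (ks1 @ ks)))"
    unfolding Gc_def nL by (rule sum_len_add)
  also have "\<dots> = (\<Sum>ks1\<in>{xs. length xs = nfree A}. \<Sum>k'\<in>UNIV. \<Sum>k\<in>UNIV. \<Sum>ks3\<in>{ys. length ys = nfree B}.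
        haar_h (ins1 A ks1 @ (i',k',True) # c @ (i,k,False) # ins1 B ks3) *
        \<phi> (ins2 A ks1 @ (k',j',True) # (k,j,False) # ins2 B ks3))"
    by (rule sum.cong[OF refl]) (simp add: sum_len_Suc fl)
  also have "\<dots> = (\<Sum>ks1\<in>{xs. length xs = nfree A}. \<Sum>ks3\<in>{ys. length ys = nfree B}. \<Sum>k'\<in>UNIV. \<Sum>k\<in>UNIV.
        haar_h (ins1 A ks1 @ (i',k',True) # c @ (i,k,False) # ins1 B ks3) *
        \<phi> (ins2 A ks1 @ (k',j',True) # (k,j,False) # ins2 B ks3))"
    by (rule sum.cong[OF refl]) (simp add: sum.swap[of _ _ "{ys. length ys = nfree B}"])
  also have "\<dots> = (\<Sum>ks1\<in>{xs. length xs = nfree A}. \<Sum>ks3\<in>{ys. length ys = nfree B}.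
        haar_h (ins1 A ks1 @ (i',j',True) # c @ (i,j,False) # ins1 B ks3) *
        \<phi> (ins2 A ks1 @ ins2 B ks3))"
    by (simp add: pair_core[OF rel dc])
  also have "\<dots> = Gc \<phi> ?R"
    unfolding Gc_def nR sum_len_add by (intro sum.cong refl) (simp add: fr)
  finally show ?thesis .
qed

lemma Gc_freeze:
  assumes rel: "respects_relations \<phi>"
  shows "dyck D \<Longrightarrow> Gc \<phi> (P @ map Fr D @ S) = Gc \<phi> (P @ map Fx D @ S)"
proof (induction D arbitrary: P S rule: dyck.induct)
  case dy_nil then show ?case by simp
next
  case (dy_cons D1 D2 a b c d)
  have "Gc \<phi> (P @ map Fr (D2 @ [(a, b, True)] @ D1 @ [(c, d, False)]) @ S)
      = Gc \<phi> ((P @ map Fr D2 @ [Fr (a,b,True)]) @ map Fr D1 @ (Fr (c,d,False) # S))" by simp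
  also have "\<dots> = Gc \<phi> ((P @ map Fr D2 @ [Fr (a,b,True)]) @ map Fx D1 @ (Fr (c,d,False) # S))"
    by (rule dy_cons.IH(1))
  also have "\<dots> = Gc \<phi> ((P @ map Fr D2) @ Fr (a,b,True) # map Fx D1 @ Fr (c,d,False) # S)" by simp
  also have "\<dots> = Gc \<phi> ((P @ map Fr D2) @ Fx (a,b,True) # map Fx D1 @ Fx (c,d,False) # S)"
    by (rule Gc_pair[OF rel dy_cons.hyps(1)])
  also have "\<dots> = Gc \<phi> (P @ map Fr D2 @ (Fx (a,b,True) # map Fx D1 @ Fx (c,d,False) # S))" by simp
  also have "\<dots> = Gc \<phi> (P @ map Fx D2 @ (Fx (a,b,True) # map Fx D1 @ Fx (c,d,False) # S))"
    by (rule dy_cons.IH(2))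
  also have "\<dots> = Gc \<phi> (P @ map Fx (D2 @ [(a, b, True)] @ D1 @ [(c, d, False)]) @ S)" by simp
  finally show ?case .
qed

definition nonneg :: "'n word \<Rightarrow> bool" where
  "nonneg w \<longleftrightarrow> (\<forall>k. dsh (drop k w) \<ge> 0)"

lemma nonneg_Nil[simp]: "nonneg []" by (simp add: nonneg_def)

lemma nonneg_Cons: "nonneg (l # w) \<longleftrightarrow> nonneg w \<and> dsh (l # w) \<ge> 0"
  unfolding nonneg_def
proof (intro iffI conjI allI)
  assume a: "\<forall>k. 0 \<le> dsh (drop k (l # w))"
  show "0 \<le> dsh (drop k w)" for k using a[rule_format, of "Suc k"] by simp
  show "0 \<le> dsh (l # w)" using a[rule_format, of 0] by simp
next
  assume a: "(\<forall>k. 0 \<le> dsh (drop k w)) \<and> 0 \<le> dsh (l # w)"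
  show "0 \<le> dsh (drop k (l # w))" for k using a by (cases k) auto
qed

inductive dec :: "nat \<Rightarrow> 'n word \<Rightarrow> bool" where
  dec0: "dyck D \<Longrightarrow> dec 0 D"
| decS: "dyck D \<Longrightarrow> dec m w \<Longrightarrow> dec (Suc m) (D @ [(a,b,False)] @ w)"

lemma dyck_append: "dyck b \<Longrightarrow> dyck a \<Longrightarrow> dyck (a @ b)"
proof (induction b rule: dyck.induct)
  case dy_nil then show ?case by simp
next
  case (dy_cons D1 D2 x y u v)
  have "dyck ((a @ D2) @ [(x, y, True)] @ D1 @ [(u, v, False)])"
    by (rule dyck.dy_cons) (use dy_cons in auto)
  then show ?case by simp
qed

lemma dec_prepend: "dec m w \<Longrightarrow> dyck E \<Longrightarrow> dec m (E @ w)"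
proof (induction rule: dec.induct)
  case (dec0 D) then show ?case by (intro dec.dec0 dyck_append)
next
  case (decS D m w a b)
  have "dec (Suc m) ((E @ D) @ [(a,b,False)] @ w)"
    by (rule dec.decS) (use decS in \<open>auto intro: dyck_append\<close>)
  then show ?case by simp
qed

lemma nonneg_dec: "nonneg w \<Longrightarrow> dec (nat (dsh w)) w"
proof (induction w)
  case Nil then show ?case by (auto intro: dec0 dy_nil)
next
  case (Cons l w)
  obtain a b e where l: "l = (a,b,e)" by (cases l) auto
  have nw: "nonneg w" and pos: "dsh (l # w) \<ge> 0" using Cons.prems by (auto simp: nonneg_Cons)
  have IH: "dec (nat (dsh w)) w" using Cons.IH nw by simp
  have dw: "dsh w \<ge> 0" using nw unfolding nonneg_def by (metis drop0)
  show ?case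
  proof (cases e)
    case False
    have "dec (Suc (nat (dsh w))) ([] @ [(a,b,False)] @ w)"
      by (rule decS[OF dy_nil IH])
    moreover have "nat (dsh (l # w)) = Suc (nat (dsh w))" using dw False l by simp
    ultimately show ?thesis using False l by simp
  next
    case True
    then have dl: "dsh (l # w) = dsh w - 1" by (simp add: l)
    then have "dsh w \<ge> 1" using pos by simp
    define m' where "m' = nat (dsh w) - 1"
    have m': "nat (dsh w) = Suc m'" using \<open>dsh w \<ge> 1\<close> by (simp add: m'_def)
    from IH[unfolded m'] obtain D a' b' w' where w: "w = D @ [(a',b',False)] @ w'" and dD: "dyck D" and dw': "dec m' w'"
      by (cases rule: dec.cases) auto
    have dy: "dyck ([] @ [(a,b,True)] @ D @ [(a',b',False)])"
      by (rule dy_cons[OF dD dy_nil])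
    have dd: "dec m' (([] @ [(a,b,True)] @ D @ [(a',b',False)]) @ w')"
      by (rule dec_prepend[OF dw' dy])
    have e2: "nat (dsh (l # w)) = m'" using dl m' by simp
    have e1: "l # w = ([] @ [(a,b,True)] @ D @ [(a',b',False)]) @ w'" using True l w by simp
    show ?thesis by (subst e2, subst e1, rule dd)
  qed
qed

lemma nonneg_dyck: "nonneg w \<Longrightarrow> dsh w = 0 \<Longrightarrow> dyck w"
proof -
  assume "nonneg w" "dsh w = 0"
  then have "dec 0 w" using nonneg_dec[of w] by simp
  then show "dyck w" by (cases rule: dec.cases) simp_all
qed

lemma drop_take_drop: "i \<le> k \<Longrightarrow> drop i (take k w) @ drop k w = drop i w"
proof -
  assume a: "i \<le> k"
  have "drop i (take k w) = take (k - i) (drop i w)" by (simp add: drop_take)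
  moreover have "drop k w = drop (k - i) (drop i w)" using a by simp
  ultimately show ?thesis by (simp only: append_take_drop_id)
qed

lemma rotation:
  assumes "dsh w = 0"
  shows "\<exists>x y. w = x @ y \<and> nonneg (y @ x)"
proof -
  let ?f = "\<lambda>k. dsh (drop k w)"
  let ?K = "{0..length w}"
  have fin: "finite (?f ` ?K)" by simp
  have ne: "?f ` ?K \<noteq> {}" by simp
  have "Min (?f ` ?K) \<in> ?f ` ?K" using fin ne by (rule Min_in)
  then obtain k0 where k0: "k0 \<in> ?K" "Min (?f ` ?K) = ?f k0" by blast
  have mn: "?f k0 \<le> ?f k" if "k \<le> length w" for k
  proof -
    have "?f k \<in> ?f ` ?K" using that by simp
    then have "Min (?f ` ?K) \<le> ?f k" using fin by (intro Min_le)
    then show ?thesis using k0(2) by simp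
  qed
  define x where "x = take k0 w"
  define y where "y = drop k0 w"
  have "dsh x + dsh y = dsh w" unfolding x_def y_def by (simp only: dsh_simps(3)[symmetric] append_take_drop_id)
  then have dx: "dsh x = - dsh y" using assms by simp
  have ly: "length y = length w - k0" by (simp add: y_def)
  have k0w: "k0 \<le> length w" using k0(1) by simp
  have "nonneg (y @ x)" unfolding nonneg_def
  proof
    fix j
    show "dsh (drop j (y @ x)) \<ge> 0"
    proof (cases "j \<le> length y")
      case True
      have "drop j (y @ x) = drop j y @ x" using True by simp
      moreover have "drop j y = drop (k0 + j) w" unfolding y_def by (simp add: add.commute)
      ultimately have "dsh (drop j (y @ x)) = dsh (drop (k0 + j) w) - dsh (drop k0 w)"
        using dx by (simp add: y_def)
      moreover have "k0 + j \<le> length w" using True ly k0w by simp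
      ultimately show ?thesis using mn[of "k0 + j"] by simp
    next
      case False
      define i where "i = min (j - length y) k0"
      have ik: "i \<le> k0" by (simp add: i_def)
      have "drop j (y @ x) = drop (j - length y) x" using False by simp
      also have "\<dots> = drop i x"
        by (cases "j - length y \<le> k0") (auto simp: i_def x_def)
      finally have d1: "drop j (y @ x) = drop i x" .
      have "drop i x @ y = drop i w" unfolding x_def y_def by (rule drop_take_drop[OF ik])
      then have "dsh (drop i x) + dsh y = dsh (drop i w)" by (metis dsh_simps(3))
      then have "dsh (drop j (y @ x)) = dsh (drop i w) - dsh (drop k0 w)" using d1 by (simp add: y_def)
      then show ?thesis using mn[of i] ik k0w by simp
    qed
  qed
  moreover have "w = x @ y" by (simp add: x_def y_def)
  ultimately show ?thesis by blast
qed

abbreviation f1 :: "'n letter \<Rightarrow> 'n \<Rightarrow> 'n letter" where "f1 \<equiv> (\<lambda>(i, j, e) k. (i, k, e))"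
abbreviation f2 :: "'n letter \<Rightarrow> 'n \<Rightarrow> 'n letter" where "f2 \<equiv> (\<lambda>(i, j, e) k. (k, j, e))"

lemma tconv_split:
  "tconv \<psi> \<phi> (x @ y) = (\<Sum>ks1\<in>{ks. length ks = length x}. \<Sum>ks2\<in>{ks. length ks = length y}.
     \<psi> (map2 f1 x ks1 @ map2 f1 y ks2) * \<phi> (map2 f2 x ks1 @ map2 f2 y ks2))"
  unfolding tconv_def length_append sum_len_add
  by (intro sum.cong refl) (simp add: zip_append)

lemma tconv_rot:
  assumes "tracial \<psi>" "tracial \<phi>"
  shows "tconv \<psi> \<phi> (x @ y) = tconv \<psi> \<phi> (y @ x)"
proof -
  have t1: "\<psi> (a @ b) = \<psi> (b @ a)" and t2: "\<phi> (a @ b) = \<phi> (b @ a)" for a b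
    using assms unfolding tracial_def by auto
  show ?thesis
    unfolding tconv_split
    by (subst sum.swap) (simp add: t1[of "map2 f1 x _"] t2[of "map2 f2 x _"])
qed

lemma dsh_map2: "length ks = length w \<Longrightarrow> dsh (map2 f1 w ks) = dsh w"
proof (induction w arbitrary: ks)
  case (Cons l w)
  then obtain k ks' where "ks = k # ks'" by (cases ks) auto
  then show ?case using Cons by (cases l) auto
qed simp

lemma conv_right:
  assumes rel: "respects_relations \<phi>" and tr: "tracial \<phi>" and one: "\<phi> [] = 1"
  shows "tconv haar_h \<phi> w = haar_h w"
proof (cases "dsh w = 0")
  case False
  have "tconv haar_h \<phi> w = 0"
    unfolding tconv_def by (rule sum.neutral) (use False in \<open>auto simp: haar_Qm dsh_map2\<close>)
  then show ?thesis using False by (simp add: haar_Qm)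
next
  case True
  obtain x y where w: "w = x @ y" and nn: "nonneg (y @ x)" using rotation[OF True] by blast
  have dy: "dyck (y @ x)" using nonneg_dyck[OF nn] True w by (simp add: add.commute)
  have trh: "tracial (haar_h :: 'a functional)" unfolding tracial_def using haar_tracial by blast
  have "tconv haar_h \<phi> w = tconv haar_h \<phi> (y @ x)" unfolding w by (rule tconv_rot[OF trh tr])
  also have "\<dots> = Gc \<phi> ([] @ map Fr (y @ x) @ [])" by (simp only: append_Nil append_Nil2 Gc_Fr)
  also have "\<dots> = Gc \<phi> ([] @ map Fx (y @ x) @ [])" by (rule Gc_freeze[OF rel dy])
  also have "\<dots> = haar_h (y @ x)" using Gc_Fx[where \<phi>=\<phi>, OF one, of "y @ x"] by simp
  also have "\<dots> = haar_h w" unfolding w by (rule haar_tracial)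
  finally show ?thesis .
qed

fun sw :: "'n letter \<Rightarrow> 'n letter" where "sw (i,j,e) = (j,i,e)"

definition rho :: "'n word \<Rightarrow> 'n word" where "rho w = rev (map sw w)"

lemma rho_simps[simp]: "rho [] = []" "rho (l # w) = rho w @ [sw l]" "rho (a @ b) = rho b @ rho a"
  by (simp_all add: rho_def)

lemma length_rho[simp]: "length (rho w) = length w" by (simp add: rho_def)

lemma sw_sw[simp]: "sw (sw l) = l" by (cases l) auto
lemma rho_rho[simp]: "rho (rho w) = w" by (simp add: rho_def rev_map comp_def)

lemma rho_rel:
  assumes "respects_relations \<phi>"
  shows "respects_relations (\<lambda>w. \<phi> (rho w))"
  unfolding respects_relations_def
proof (intro allI conjI)
  fix a b :: "'a word" and i j :: 'a
  have r: "\<And>a b i j. (\<Sum>k\<in>UNIV. \<phi> (a @ [(k, i, True), (k, j, False)] @ b)) = (if i = j then \<phi> (a @ b) else 0)"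
     "\<And>a b i j. (\<Sum>k\<in>UNIV. \<phi> (a @ [(i, k, False), (j, k, True)] @ b)) = (if i = j then \<phi> (a @ b) else 0)"
    using assms unfolding respects_relations_def by auto
  show "(\<Sum>k\<in>UNIV. \<phi> (rho (a @ [(k, i, True), (k, j, False)] @ b))) = (if i = j then \<phi> (rho (a @ b)) else 0)"
    using r(2)[of "rho b" j i "rho a"] by auto
  show "(\<Sum>k\<in>UNIV. \<phi> (rho (a @ [(i, k, False), (j, k, True)] @ b))) = (if i = j then \<phi> (rho (a @ b)) else 0)"
    using r(1)[of "rho b" j i "rho a"] by auto
qed

lemma rho_tracial: "tracial \<phi> \<Longrightarrow> tracial (\<lambda>w. \<phi> (rho w))"
  unfolding tracial_def by simp

lemma transpose_unit: "transpose (matunit a b) = matunit b a"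
  by (auto simp: transpose_def matunit_def vec_eq_iff)

lemma Sm_sw: "Sm (sw l) k m = transpose (Sm l (-k - lsh l) (-m - 1))"
  by (cases l) (auto simp: transpose_unit transpose_mat)

lemma dsh_rho[simp]: "dsh (rho w) = dsh w"
proof (induction w)
  case (Cons l w) then show ?case by (cases l) auto
qed simp

lemma Q_rho: "Qm (rho w) k m = transpose (Qm w (-k - dsh w) (-m - 1))"
proof (induction w arbitrary: k)
  case Nil then show ?case by (simp add: transpose_mat)
next
  case (Cons l w)
  have "Qm (rho (l # w)) k m = Qm (rho w) (k + lsh l) m ** Sm (sw l) k m"
  proof -
    have "lsh (sw l) = lsh l" by (cases l) auto
    then show ?thesis by (simp add: Q_append)
  qed
  also have "\<dots> = transpose (Qm w (-k - lsh l - dsh w) (-m - 1)) ** transpose (Sm l (-k - lsh l) (-m - 1))"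
    by (simp add: Cons Sm_sw algebra_simps)
  also have "\<dots> = transpose (Qm (l # w) (-k - dsh (l # w)) (-m - 1))"
    by (simp add: matrix_transpose_mul algebra_simps)
  finally show ?case .
qed

lemma transpose_eq_1[simp]: "transpose X = mat 1 \<longleftrightarrow> X = (mat 1 :: complex^'n^'n)"
  by (metis transpose_mat transpose_transpose)

lemma mtrace_transpose: "mtrace (transpose A) = mtrace A"
  by (simp add: mtrace_def transpose_def)

lemma haar_rho: "haar_h (rho w) = haar_h w"
proof (cases "dsh w = 0")
  case False then show ?thesis by (simp add: haar_Qm)
next
  case True
  have q: "Qm (rho w) 0 = (\<lambda>m. transpose (Qm w 0 (-m - 1)))"
    using True by (simp add: fun_eq_iff Q_rho)
  have "trprod (\<lambda>m. transpose (Qm w 0 (-m - 1))) = trprod (Qm w 0)"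
    unfolding trprod_def
    by (rule prod.reindex_bij_witness[of _ "\<lambda>m. -m - 1" "\<lambda>m. -m - 1"]) (auto simp: mtrace_transpose)
  then show ?thesis using True by (simp add: haar_Qm q)
qed

lemma map2_rev: "length ks = length w \<Longrightarrow> map2 f (rev w) (rev ks) = rev (map2 f w ks)"
  by (simp add: zip_rev rev_map)

lemma map2_sw1: "length ks = length w \<Longrightarrow> map2 f1 (map sw w) ks = map sw (map2 f2 w ks)"
proof (induction w arbitrary: ks)
  case (Cons l w)
  then obtain k ks' where "ks = k # ks'" by (cases ks) auto
  then show ?case using Cons by (cases l) auto
qed simp

lemma map2_sw2: "length ks = length w \<Longrightarrow> map2 f2 (map sw w) ks = map sw (map2 f1 w ks)"
proof (induction w arbitrary: ks)
  case (Cons l w)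
  then obtain k ks' where "ks = k # ks'" by (cases ks) auto
  then show ?case using Cons by (cases l) auto
qed simp

lemma tconv_rho: "tconv \<phi> \<psi> (rho w) = tconv (\<lambda>v. \<psi> (rho v)) (\<lambda>v. \<phi> (rho v)) w"
proof -
  have "tconv \<phi> \<psi> (rho w) = (\<Sum>ks\<in>{ks. length ks = length w}.
      \<phi> (map2 f1 (rho w) (rev ks)) * \<psi> (map2 f2 (rho w) (rev ks)))"
    unfolding tconv_def
    by (rule sum.reindex_bij_witness[of _ rev rev]) auto
  also have "\<dots> = tconv (\<lambda>v. \<psi> (rho v)) (\<lambda>v. \<phi> (rho v)) w"
    unfolding tconv_def
    by (intro sum.cong refl) (simp add: rho_def map2_rev map2_sw1 map2_sw2 mult.commute)
  finally show ?thesis .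
qed

lemma conv_left:
  assumes rel: "respects_relations \<phi>" and tr: "tracial \<phi>" and one: "\<phi> [] = 1"
  shows "tconv \<phi> haar_h w = haar_h w"
proof -
  have hr: "(\<lambda>v. haar_h (rho v)) = haar_h" by (simp add: fun_eq_iff haar_rho)
  have "tconv \<phi> haar_h w = tconv \<phi> haar_h (rho (rho w))" by simp
  also have "\<dots> = tconv haar_h (\<lambda>v. \<phi> (rho v)) (rho w)" by (simp only: tconv_rho hr)
  also have "\<dots> = haar_h (rho w)"
    by (rule conv_right[OF rho_rel[OF rel] rho_tracial[OF tr]]) (simp add: one)
  also have "\<dots> = haar_h w" by (rule haar_rho)
  finally show ?thesis .
qed

theorem mainTheorem10:
  shows "is_state (haar_h :: ('n::finite) functional) \<and> tracial (haar_h :: 'n functional) \<and>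
    (\<forall>\<phi> :: 'n functional. is_state \<phi> \<and> tracial \<phi> \<longrightarrow> tconv haar_h \<phi> = haar_h) \<and>
    is_tensor_haar_trace (haar_h :: 'n functional)"
proof -
  have st: "is_state (haar_h :: 'n functional)" by (rule haar_state)
  have tr: "tracial (haar_h :: 'n functional)" unfolding tracial_def using haar_tracial by blast
  have R: "tconv haar_h \<phi> = haar_h" and L: "tconv \<phi> haar_h = haar_h"
    if "is_state \<phi>" "tracial \<phi>" for \<phi> :: "'n functional"
    using that conv_right[of \<phi>] conv_left[of \<phi>] unfolding is_state_def by (auto simp: fun_eq_iff)
  show ?thesis using st tr R L unfolding is_tensor_haar_trace_def by blast
qed

end
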